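(* Let $q$ be a prime power, $1\le k<n\le m$, let $g_1,\dots,g_n\in\mathbb{F}_{q^m}$ be linearly independent over $\mathbb{F}_q$, and let $\mathcal{G}$ be the Gabidulin code of dimension $k$ with respect to $g_1,\dots,g_n$. Then for every $f\in\mathcal{L}_q(x,\mathbb{F}_{q^m})$ with $\deg_q(f)=k$, the word $\sigma_f=(f(g_1),\dots,f(g_n))$ is a deep hole of $\mathcal{G}$ in the rank metric, i.e. $d_R(\sigma_f,\mathcal{G})=n-k$, which equals the covering radius of $\mathcal{G}$. Consequently $\mathcal{G}$ has at least $(q^m-1)q^{mk}$ deep holes in the rank metric.
   Context: A $q$-linearized polynomial over $\mathbb{F}_{q^m}$ is a polynomial $L(x)=\sum_{i=0}^{d}a_ix^{q^i}$ with $a_i\in\mathbb{F}_{q^m}$; if $a_d\ne0$, $d$ is its $q$-degree $\deg_q(L)$. $\mathcal{L}_q(x,\mathbb{F}_{q^m})$ is the set of these. Rank weight: for $\mathbf{u}=(u_1,\dots,u_n)\in\mathbb{F}_{q^m}^n$, $w_R(\mathbf{u})=\dim_{\mathbb{F}_q}\langle u_1,\dots,u_n\rangle$ (the rank of the matrix of coordinates of the $u_j$ in an $\mathbb{F}_q$-basis of $\mathbb{F}_{q^m}$); $d_R(\mathbf{u},\mathbf{v})=w_R(\mathbf{u}-\mathbf{v})$, $d_R(\mathbf{u},C)=\min_{\mathbf{c}\in C}d_R(\mathbf{u},\mathbf{c})$. The covering radius of $C$ is $\max_{\mathbf{u}\in\mathbb{F}_{q^m}^n}d_R(\mathbf{u},C)$,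 and a deep hole is a word attaining it. The Gabidulin code of dimension $k$ with respect to $\mathbb{F}_q$-linearly independent $g_1,\dots,g_n$ is $\mathcal{G}=\{(v(g_1),\dots,v(g_n)) : v\in\mathcal{L}_q(x,\mathbb{F}_{q^m}),\ v=0\text{ or }\deg_q(v)<k\}$; its covering radius in the rank metric is known to be $n-k$. *)

theory Defs
  imports "HOL-Algebra.Algebra"
begin

text \<open>q-linearized polynomials over the field R, represented by coefficient lists
  a = [a_0, ..., a_d]; L(x) = sum_i a_i x^(q^i).\<close>

definition linpolys :: "('a, 'b) ring_scheme \<Rightarrow> 'a list set" where
  "linpolys R = {a. set a \<subseteq> carrier R}"

definition lin_eval :: "('a, 'b) ring_scheme \<Rightarrow> nat \<Rightarrow> 'a list \<Rightarrow> 'a \<Rightarrow> 'a" where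
  "lin_eval R q a x = (\<Oplus>\<^bsub>R\<^esub> i \<in> {..<length a}. a ! i \<otimes>\<^bsub>R\<^esub> (x [^]\<^bsub>R\<^esub> (q ^ i)))"

definition lin_is_zero :: "('a, 'b) ring_scheme \<Rightarrow> 'a list \<Rightarrow> bool" where
  "lin_is_zero R a \<longleftrightarrow> (\<forall>i < length a. a ! i = \<zero>\<^bsub>R\<^esub>)"

text \<open>q-degree: largest index of a nonzero coefficient (meaningful for nonzero a).\<close>
definition lin_qdeg :: "('a, 'b) ring_scheme \<Rightarrow> 'a list \<Rightarrow> nat" where
  "lin_qdeg R a = Max {i. i < length a \<and> a ! i \<noteq> \<zero>\<^bsub>R\<^esub>}"

definition words :: "('a, 'b) ring_scheme \<Rightarrow> nat \<Rightarrow> 'a list set" where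
  "words R n = {u. length u = n \<and> set u \<subseteq> carrier R}"

definition gabidulin :: "('a, 'b) ring_scheme \<Rightarrow> nat \<Rightarrow> nat \<Rightarrow> 'a list \<Rightarrow> 'a list set" where
  "gabidulin R q k gs =
     {map (lin_eval R q v) gs | v. v \<in> linpolys R \<and> (lin_is_zero R v \<or> lin_qdeg R v < k)}"

definition rank_weight :: "('a, 'b) ring_scheme \<Rightarrow> 'a set \<Rightarrow> 'a list \<Rightarrow> nat" where
  "rank_weight R K u = ring.dim R K (ring.Span R K u)"

definition rank_dist :: "('a, 'b) ring_scheme \<Rightarrow> 'a set \<Rightarrow> 'a list \<Rightarrow> 'a list \<Rightarrow> nat" where
  "rank_dist R K u v = rank_weight R K (map2 (\<lambda>x y. x \<ominus>\<^bsub>R\<^esub> y) u v)"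

definition dist_to_code :: "('a, 'b) ring_scheme \<Rightarrow> 'a set \<Rightarrow> 'a list \<Rightarrow> 'a list set \<Rightarrow> nat" where
  "dist_to_code R K u C = Min (rank_dist R K u ` C)"

definition covering_radius :: "('a, 'b) ring_scheme \<Rightarrow> 'a set \<Rightarrow> nat \<Rightarrow> 'a list set \<Rightarrow> nat" where
  "covering_radius R K n C = Max ((\<lambda>u. dist_to_code R K u C) ` words R n)"

definition deep_hole :: "('a, 'b) ring_scheme \<Rightarrow> 'a set \<Rightarrow> nat \<Rightarrow> 'a list set \<Rightarrow> 'a list \<Rightarrow> bool" where
  "deep_hole R K n C u \<longleftrightarrow> u \<in> words R n \<and> dist_to_code R K u C = covering_radius R K n C"

end

theory Submission
  imports Defs
begin

lemma (in cring) binomial_Algebra: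
  assumes a: "a \<in> carrier R" and b: "b \<in> carrier R"
  shows "(a \<oplus> b) [^] n = (\<Oplus>k\<in>{..n}. add_pow R (n choose k) (a [^] k \<otimes> b [^] (n - k)))"
proof (induction n)
  case 0
  then show ?case using a b by simp
next
  case (Suc n)
  define T where "T = (\<lambda>(n::nat) k. a [^] k \<otimes> b [^] (n - k))"
  have Tc: "T n k \<in> carrier R" for n k using a b by (simp add: T_def)
  have IH: "(a \<oplus> b) [^] n = (\<Oplus>k\<in>{..n}. add_pow R (n choose k) (T n k))"
    using Suc.IH by (simp add: T_def)
  have Sc: "(\<Oplus>k\<in>{..n}. add_pow R (n choose k) (T n k)) \<in> carrier R"
    by (rule finsum_closed) (auto simp: Tc)
  have "(a \<oplus> b) [^] Suc n = (a \<oplus> b) [^] n \<otimes> a \<oplus> (a \<oplus> b) [^] n \<otimes> b"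
    using a b by (simp add: r_distr)
  also have "(a \<oplus> b) [^] n \<otimes> a = (\<Oplus>k\<in>{..n}. add_pow R (n choose k) (T (Suc n) (Suc k)))"
  proof -
    have "(a \<oplus> b) [^] n \<otimes> a = (\<Oplus>k\<in>{..n}. add_pow R (n choose k) (T n k) \<otimes> a)"
      unfolding IH by (rule finsum_ldistr) (auto simp: Tc a)
    also have "\<dots> = (\<Oplus>k\<in>{..n}. add_pow R (n choose k) (T (Suc n) (Suc k)))"
    proof (rule finsum_cong')
      fix k assume k: "k \<in> {..n}"
      have "add_pow R (n choose k) (T n k) \<otimes> a = add_pow R (n choose k) (T n k \<otimes> a)"
        using add_pow_ldistr Tc a by simp
      also have "T n k \<otimes> a = T (Suc n) (Suc k)"
        using a b k by (simp add: T_def m_ac nat_pow_Suc2)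
      finally show "add_pow R (n choose k) (T n k) \<otimes> a = add_pow R (n choose k) (T (Suc n) (Suc k))" .
    qed (auto simp: Tc)
    finally show ?thesis .
  qed
  also have "(a \<oplus> b) [^] n \<otimes> b = (\<Oplus>k\<in>{..n}. add_pow R (n choose k) (T (Suc n) k))"
  proof -
    have "(a \<oplus> b) [^] n \<otimes> b = (\<Oplus>k\<in>{..n}. add_pow R (n choose k) (T n k) \<otimes> b)"
      unfolding IH by (rule finsum_ldistr) (auto simp: Tc b)
    also have "\<dots> = (\<Oplus>k\<in>{..n}. add_pow R (n choose k) (T (Suc n) k))"
    proof (rule finsum_cong')
      fix k assume k: "k \<in> {..n}"
      have "add_pow R (n choose k) (T n k) \<otimes> b = add_pow R (n choose k) (T n k \<otimes> b)"
        using add_pow_ldistr Tc b by simp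
      also have "T n k \<otimes> b = T (Suc n) k"
        using a b k by (simp add: T_def m_ac Suc_diff_le)
      finally show "add_pow R (n choose k) (T n k) \<otimes> b = add_pow R (n choose k) (T (Suc n) k)" .
    qed (auto simp: Tc)
    finally show ?thesis .
  qed
  also have "(\<Oplus>k\<in>{..n}. add_pow R (n choose k) (T (Suc n) k))
      = add_pow R (Suc n choose 0) (T (Suc n) 0) \<oplus> (\<Oplus>k\<in>{..n}. add_pow R (n choose Suc k) (T (Suc n) (Suc k)))"
  proof -
    have "(\<Oplus>k\<in>{..Suc n}. add_pow R (n choose k) (T (Suc n) k))
       = add_pow R (n choose Suc n) (T (Suc n) (Suc n)) \<oplus> (\<Oplus>k\<in>{..n}. add_pow R (n choose k) (T (Suc n) k))"
      by (rule finsum_Suc) (auto simp: Tc)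
    also have "\<dots> = (\<Oplus>k\<in>{..n}. add_pow R (n choose k) (T (Suc n) k))"
      by (simp add: finsum_closed Tc binomial_eq_0)
    finally have 1: "(\<Oplus>k\<in>{..Suc n}. add_pow R (n choose k) (T (Suc n) k)) = (\<Oplus>k\<in>{..n}. add_pow R (n choose k) (T (Suc n) k))" .
    have 2: "(\<Oplus>k\<in>{..Suc n}. add_pow R (n choose k) (T (Suc n) k))
      = (\<Oplus>k\<in>{..n}. add_pow R (n choose Suc k) (T (Suc n) (Suc k))) \<oplus> add_pow R (n choose 0) (T (Suc n) 0)"
      by (rule finsum_Suc2) (auto simp: Tc)
    show ?thesis using 1 2 by (simp add: a_comm finsum_closed Tc)
  qed
  finally have "(a \<oplus> b) [^] Suc n = (\<Oplus>k\<in>{..n}. add_pow R (n choose k) (T (Suc n) (Suc k))) \<oplus>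
     (add_pow R (Suc n choose 0) (T (Suc n) 0) \<oplus> (\<Oplus>k\<in>{..n}. add_pow R (n choose Suc k) (T (Suc n) (Suc k))))" .
  also have "\<dots> = add_pow R (Suc n choose 0) (T (Suc n) 0) \<oplus> (\<Oplus>k\<in>{..n}. add_pow R (Suc n choose Suc k) (T (Suc n) (Suc k)))"
  proof -
    have "(\<Oplus>k\<in>{..n}. add_pow R (Suc n choose Suc k) (T (Suc n) (Suc k))) =
      (\<Oplus>k\<in>{..n}. add_pow R (n choose k) (T (Suc n) (Suc k)) \<oplus> add_pow R (n choose Suc k) (T (Suc n) (Suc k)))"
      by (rule finsum_cong') (auto simp: Tc add.nat_pow_mult)
    also have "\<dots> = (\<Oplus>k\<in>{..n}. add_pow R (n choose k) (T (Suc n) (Suc k))) \<oplus> (\<Oplus>k\<in>{..n}. add_pow R (n choose Suc k) (T (Suc n) (Suc k)))"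
      by (rule finsum_addf) (auto simp: Tc)
    finally show ?thesis by (simp add: a_ac finsum_closed Tc)
  qed
  also have "\<dots> = (\<Oplus>k\<in>{..Suc n}. add_pow R (Suc n choose k) (T (Suc n) k))"
    by (subst finsum_Suc2) (auto simp: Tc a_comm finsum_closed)
  finally show ?case by (simp add: T_def)
qed


locale gctx = field R for R :: "('a, 'b) ring_scheme" (structure) +
  fixes K :: "'a set" and q :: nat
  assumes K: "subfield K R" and finR: "finite (carrier R)" and cardK: "card K = q"
    and qpp: "\<exists>(p::nat) e. Factorial_Ring.prime p \<and> 0 < e \<and> q = p ^ e"
begin

lemma K_sub: "K \<subseteq> carrier R" using subfieldE(3)[OF K] .
lemma finK: "finite K" using finite_subset[OF K_sub finR] .
lemma zero_K: "\<zero> \<in> K" using subringE(2)[OF subfieldE(1)[OF K]] .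
lemma one_K: "\<one> \<in> K" using subringE(3)[OF subfieldE(1)[OF K]] .

lemma q_ge2: "2 \<le> q"
proof -
  obtain p e where "Factorial_Ring.prime (p::nat)" "0 < e" "q = p ^ e" using qpp by blast
  then have "p \<ge> 2" using prime_ge_2_nat by auto
  moreover have "p ^ 1 \<le> p ^ e" using \<open>0 < e\<close> \<open>p \<ge> 2\<close> by (intro power_increasing) auto
  ultimately show ?thesis using \<open>q = p ^ e\<close> by simp
qed

lemma q_add_zero: "add_pow R q \<one> = \<zero>"
proof -
  interpret F: field "R\<lparr>carrier := K\<rparr>" using subfield_iff(2)[OF K] .
  have "add_pow (R\<lparr>carrier := K\<rparr>) (order (add_monoid (R\<lparr>carrier := K\<rparr>))) \<one> = \<zero>\<^bsub>R\<lparr>carrier := K\<rparr>\<^esub>"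
    using F.add.pow_order_eq_1[of \<one>] one_K by simp
  moreover have "order (add_monoid (R\<lparr>carrier := K\<rparr>)) = q" using cardK by (simp add: order_def)
  moreover have "add_pow (R\<lparr>carrier := K\<rparr>) (n::nat) x = add_pow R n x" for n x
    by (simp add: add_pow_def nat_pow_def)
  ultimately show ?thesis by simp
qed

lemma add_pow_one_mult: "add_pow R ((m::nat) * n) \<one> = add_pow R m \<one> \<otimes> add_pow R n \<one>"
proof -
  have "add_pow R m \<one> \<otimes> add_pow R n \<one> = add_pow R m (\<one> \<otimes> add_pow R n \<one>)"
    by (rule add_pow_ldistr) auto
  also have "\<dots> = add_pow R m (add_pow R n \<one>)" by simp
  also have "\<dots> = add_pow R (n * m) \<one>" by (simp add: add.nat_pow_pow)
  finally show ?thesis by (simp add: mult.commute)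
qed

lemma add_pow_one_power: "add_pow R ((m::nat) ^ (e::nat)) \<one> = add_pow R m \<one> [^] e"
  by (induction e) (simp_all add: add_pow_one_mult m_comm)

definition "pch = (SOME p. \<exists>e. Factorial_Ring.prime (p::nat) \<and> 0 < e \<and> q = p ^ e)"

lemma pch: "\<exists>e. Factorial_Ring.prime pch \<and> 0 < e \<and> q = pch ^ e"
  unfolding pch_def using someI_ex[OF qpp] .

lemma pch_prime: "Factorial_Ring.prime pch" using pch by blast

lemma pow_zero_imp: "x \<in> carrier R \<Longrightarrow> x [^] (e::nat) = \<zero> \<Longrightarrow> x = \<zero>"
proof (induction e)
  case 0 then show ?case by simp
next
  case (Suc e) then show ?case using integral by fastforce
qed

lemma pch_add_one: "add_pow R pch \<one> = \<zero>"
proof -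
  obtain e where "0 < e" "q = pch ^ e" using pch by blast
  then have "add_pow R (pch ^ e) \<one> = \<zero>" using q_add_zero by simp
  then have "add_pow R pch \<one> [^] e = \<zero>" by (simp add: add_pow_one_power)
  then show ?thesis using pow_zero_imp by simp
qed

lemma pch_add: "x \<in> carrier R \<Longrightarrow> add_pow R pch x = \<zero>"
proof -
  assume x: "x \<in> carrier R"
  have "add_pow R pch \<one> \<otimes> x = add_pow R pch (\<one> \<otimes> x)" by (rule add_pow_ldistr) (auto simp: x)
  then show ?thesis using pch_add_one x by simp
qed

lemma frob_p: assumes a: "a \<in> carrier R" and b: "b \<in> carrier R"
  shows "(a \<oplus> b) [^] pch = a [^] pch \<oplus> b [^] pch"
proof -
  define p where "p = pch"
  have pp: "Factorial_Ring.prime p" using pch_prime p_def by simp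
  obtain p' where p': "p = Suc (Suc p')" using prime_ge_2_nat[OF pp]
    by (metis add_2_eq_Suc le_Suc_ex)
  define g where "g = (\<lambda>k. add_pow R (p choose k) (a [^] k \<otimes> b [^] (p - k)))"
  have gc: "g k \<in> carrier R" for k using a b by (simp add: g_def)
  have gz: "g (Suc i) = \<zero>" if "i \<in> {..p'}" for i
  proof -
    have "p dvd (p choose Suc i)" using that p' by (intro dvd_choose_prime pp) auto
    then obtain t where t: "p choose Suc i = p * t" by blast
    have "g (Suc i) = add_pow R t (add_pow R p (a [^] Suc i \<otimes> b [^] (p - Suc i)))"
      unfolding g_def t using a b by (simp add: add.nat_pow_pow mult.commute)
    also have "\<dots> = \<zero>" using pch_add a b p_def by simp
    finally show ?thesis .
  qed
  have "(a \<oplus> b) [^] p = (\<Oplus>k\<in>{..p}. g k)" unfolding g_def using binomial_Algebra[OF a b] .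
  also have "\<dots> = g p \<oplus> (\<Oplus>k\<in>{..Suc p'}. g k)"
    unfolding p' by (rule finsum_Suc) (auto simp: gc)
  also have "(\<Oplus>k\<in>{..Suc p'}. g k) = (\<Oplus>i\<in>{..p'}. g (Suc i)) \<oplus> g 0"
    by (rule finsum_Suc2) (auto simp: gc)
  also have "(\<Oplus>i\<in>{..p'}. g (Suc i)) = (\<Oplus>i\<in>{..p'}. \<zero>)"
    by (rule finsum_cong') (auto simp: gz)
  finally show ?thesis using a b by (simp add: g_def p_def[symmetric])
qed

lemma frob_pp: assumes a: "a \<in> carrier R" and b: "b \<in> carrier R"
  shows "(a \<oplus> b) [^] (pch ^ i) = a [^] (pch ^ i) \<oplus> b [^] (pch ^ i)"
proof (induction i)
  case 0 then show ?case using a b by simp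
next
  case (Suc i)
  have "(a \<oplus> b) [^] (pch ^ Suc i) = ((a \<oplus> b) [^] (pch ^ i)) [^] pch"
    using a b by (simp add: nat_pow_pow mult.commute)
  also have "\<dots> = (a [^] (pch ^ i)) [^] pch \<oplus> (b [^] (pch ^ i)) [^] pch"
    using Suc a b by (simp add: frob_p)
  finally show ?case using a b by (simp add: nat_pow_pow mult.commute)
qed

lemma frob: assumes a: "a \<in> carrier R" and b: "b \<in> carrier R"
  shows "(a \<oplus> b) [^] (q ^ i) = a [^] (q ^ i) \<oplus> b [^] (q ^ i)"
proof -
  obtain e where "q = pch ^ e" using pch by blast
  then have "q ^ i = pch ^ (e * i)" by (simp add: power_mult)
  then show ?thesis using frob_pp[OF a b] by simp
qed

lemma K_fix: assumes c: "c \<in> K" shows "c [^] q = c"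
proof (cases "c = \<zero>")
  case True then show ?thesis using q_ge2 by (simp add: nat_pow_zero)
next
  case False
  interpret F: field "R\<lparr>carrier := K\<rparr>" using subfield_iff(2)[OF K] .
  interpret G: group "Multiplicative_Group.mult_of (R\<lparr>carrier := K\<rparr>)" using F.field_mult_group .
  have ord: "order (Multiplicative_Group.mult_of (R\<lparr>carrier := K\<rparr>)) = q - 1"
    using F.order_mult_of finK cardK by (simp add: order_def)
  have cc: "c \<in> carrier (Multiplicative_Group.mult_of (R\<lparr>carrier := K\<rparr>))" using c False by simp
  have "c [^]\<^bsub>Multiplicative_Group.mult_of (R\<lparr>carrier := K\<rparr>)\<^esub> (q - 1) = \<one>"
    using G.pow_order_eq_1[OF cc] ord by simp
  then have "c [^] (q - 1) = \<one>"
    unfolding Multiplicative_Group.nat_pow_mult_of nat_pow_consistent[symmetric] .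
  moreover have "c [^] q = c [^] (q - 1) \<otimes> c"
  proof -
    obtain q' where "q = Suc q'" using q_ge2 by (cases q) auto
    then show ?thesis by simp
  qed
  ultimately show ?thesis using c K_sub by auto
qed

lemma K_fix_pow: "c \<in> K \<Longrightarrow> c [^] (q ^ i) = c"
proof (induction i)
  case 0 then show ?case using K_sub by auto
next
  case (Suc i)
  have "c [^] (q ^ Suc i) = (c [^] (q ^ i)) [^] q"
  proof -
    have "c [^] (q ^ Suc i) = c [^] (q ^ i * q)" by (simp add: mult.commute)
    also have "\<dots> = (c [^] (q ^ i)) [^] q" by (rule nat_pow_pow[symmetric]) (use Suc.prems K_sub in auto)
    finally show ?thesis .
  qed
  then show ?case using Suc K_fix K_sub by auto
qed

end

definition nth0 :: "('a, 'b) ring_scheme \<Rightarrow> 'a list \<Rightarrow> nat \<Rightarrow> 'a" where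
  "nth0 R a i = (if i < length a then a ! i else \<zero>\<^bsub>R\<^esub>)"

definition lsub :: "('a, 'b) ring_scheme \<Rightarrow> 'a list \<Rightarrow> 'a list \<Rightarrow> 'a list" where
  "lsub R a b = map (\<lambda>i. nth0 R a i \<ominus>\<^bsub>R\<^esub> nth0 R b i) [0..<max (length a) (length b)]"

lemma nth_in_carrier_aux [simp]: "set a \<subseteq> S \<Longrightarrow> i < length a \<Longrightarrow> a ! i \<in> S"
  by (auto dest: nth_mem)

context gctx begin

lemma nth0_closed: "set a \<subseteq> carrier R \<Longrightarrow> nth0 R a i \<in> carrier R"
  by (auto simp: nth0_def)

lemma lin_eval_closed: "set a \<subseteq> carrier R \<Longrightarrow> x \<in> carrier R \<Longrightarrow> lin_eval R q a x \<in> carrier R"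
  unfolding lin_eval_def by (rule finsum_closed) auto

lemma lin_eval_add:
  assumes a: "set a \<subseteq> carrier R" and x: "x \<in> carrier R" and y: "y \<in> carrier R"
  shows "lin_eval R q a (x \<oplus> y) = lin_eval R q a x \<oplus> lin_eval R q a y"
proof -
  have "lin_eval R q a (x \<oplus> y) = (\<Oplus>i\<in>{..<length a}. a ! i \<otimes> x [^] (q ^ i) \<oplus> a ! i \<otimes> y [^] (q ^ i))"
    unfolding lin_eval_def
    by (rule finsum_cong') (use a x y in \<open>auto simp: frob r_distr\<close>)
  also have "\<dots> = lin_eval R q a x \<oplus> lin_eval R q a y"
    unfolding lin_eval_def by (rule finsum_addf) (use a x y in auto)
  finally show ?thesis .
qed

lemma lin_eval_smult:
  assumes a: "set a \<subseteq> carrier R" and x: "x \<in> carrier R" and c: "c \<in> K"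
  shows "lin_eval R q a (c \<otimes> x) = c \<otimes> lin_eval R q a x"
proof -
  have cc: "c \<in> carrier R" using c K_sub by auto
  have "lin_eval R q a (c \<otimes> x) = (\<Oplus>i\<in>{..<length a}. c \<otimes> (a ! i \<otimes> x [^] (q ^ i)))"
    unfolding lin_eval_def
  proof (rule finsum_cong')
    fix i assume i: "i \<in> {..<length a}"
    have ai: "a ! i \<in> carrier R" using a i by auto
    have "(c \<otimes> x) [^] (q ^ i) = c [^] (q ^ i) \<otimes> x [^] (q ^ i)"
      using cc x by (simp add: pow_mult_distrib m_comm)
    also have "\<dots> = c \<otimes> x [^] (q ^ i)" using K_fix_pow c by simp
    finally show "a ! i \<otimes> (c \<otimes> x) [^] q ^ i = c \<otimes> (a ! i \<otimes> x [^] q ^ i)"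
      using ai cc x by (simp add: m_lcomm)
  qed (use a x cc in auto)
  also have "\<dots> = c \<otimes> lin_eval R q a x"
    unfolding lin_eval_def by (rule finsum_rdistr[symmetric]) (use a x cc in auto)
  finally show ?thesis .
qed

lemma lin_eval_zero: "set a \<subseteq> carrier R \<Longrightarrow> lin_eval R q a \<zero> = \<zero>"
proof -
  assume a: "set a \<subseteq> carrier R"
  have "lin_eval R q a \<zero> = (\<Oplus>i\<in>{..<length a}. \<zero>)"
    unfolding lin_eval_def
    by (rule finsum_cong') (use a q_ge2 in \<open>auto simp: nat_pow_zero\<close>)
  then show ?thesis by simp
qed

lemma lin_eval_combine:
  assumes a: "set a \<subseteq> carrier R"
  shows "set Ks \<subseteq> K \<Longrightarrow> set Us \<subseteq> carrier R \<Longrightarrow>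
     lin_eval R q a (combine Ks Us) = combine Ks (map (lin_eval R q a) Us)"
proof (induction Ks Us rule: combine.induct)
  case (1 k Ks u Us)
  have k: "k \<in> carrier R" using 1 K_sub by auto
  have Ks: "set Ks \<subseteq> carrier R" using 1 K_sub by auto
  have "lin_eval R q a (combine (k # Ks) (u # Us)) = lin_eval R q a (k \<otimes> u) \<oplus> lin_eval R q a (combine Ks Us)"
    using 1 k Ks by (simp add: lin_eval_add a)
  also have "\<dots> = k \<otimes> lin_eval R q a u \<oplus> combine Ks (map (lin_eval R q a) Us)"
    using 1 by (simp add: lin_eval_smult a)
  finally show ?case by simp
next
  case ("2_1" Us) then show ?case by (simp add: lin_eval_zero a)
next
  case ("2_2" Ks) then show ?case by (simp add: lin_eval_zero a)
qed

lemma lin_eval_Span: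
  assumes a: "set a \<subseteq> carrier R" and U: "set Us \<subseteq> carrier R"
  shows "lin_eval R q a ` Span K Us = Span K (map (lin_eval R q a) Us)"
proof -
  have U': "set (map (lin_eval R q a) Us) \<subseteq> carrier R" using U a lin_eval_closed by auto
  show ?thesis
    unfolding Span_eq_combine_set_length_version[OF K U] Span_eq_combine_set_length_version[OF K U']
  proof (intro equalityI subsetI)
    fix y assume "y \<in> lin_eval R q a ` {combine Ks Us |Ks. length Ks = length Us \<and> set Ks \<subseteq> K}"
    then show "y \<in> {combine Ks (map (lin_eval R q a) Us) |Ks. length Ks = length (map (lin_eval R q a) Us) \<and> set Ks \<subseteq> K}"
      using lin_eval_combine[OF a _ U] by auto
  next
    fix y assume "y \<in> {combine Ks (map (lin_eval R q a) Us) |Ks. length Ks = length (map (lin_eval R q a) Us) \<and> set Ks \<subseteq> K}"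
    then obtain Ks where "y = combine Ks (map (lin_eval R q a) Us)" "length Ks = length Us" "set Ks \<subseteq> K" by auto
    then show "y \<in> lin_eval R q a ` {combine Ks Us |Ks. length Ks = length Us \<and> set Ks \<subseteq> K}"
      using lin_eval_combine[OF a _ U] by (intro image_eqI[of _ _ "combine Ks Us"]) auto
  qed
qed

lemma lin_eval_ext:
  assumes a: "set a \<subseteq> carrier R" and x: "x \<in> carrier R" and N: "length a \<le> N"
  shows "lin_eval R q a x = (\<Oplus>i\<in>{..<N}. nth0 R a i \<otimes> x [^] (q ^ i))"
proof -
  have U: "{..<N} = {..<length a} \<union> {length a..<N}" using N by auto
  have "(\<Oplus>i\<in>{..<N}. nth0 R a i \<otimes> x [^] (q ^ i)) =
     (\<Oplus>i\<in>{..<length a}. nth0 R a i \<otimes> x [^] (q ^ i)) \<oplus> (\<Oplus>i\<in>{length a..<N}. nth0 R a i \<otimes> x [^] (q ^ i))"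
    unfolding U by (rule finsum_Un_disjoint) (use a x in \<open>auto simp: nth0_closed\<close>)
  also have "(\<Oplus>i\<in>{length a..<N}. nth0 R a i \<otimes> x [^] (q ^ i)) = (\<Oplus>i\<in>{length a..<N}. \<zero>)"
    by (rule finsum_cong') (use x in \<open>auto simp: nth0_def\<close>)
  also have "(\<Oplus>i\<in>{..<length a}. nth0 R a i \<otimes> x [^] (q ^ i)) = lin_eval R q a x"
    unfolding lin_eval_def by (rule finsum_cong') (use a x in \<open>auto simp: nth0_def\<close>)
  finally show ?thesis using lin_eval_closed[OF a x] by simp
qed

lemma lsub_closed: "set a \<subseteq> carrier R \<Longrightarrow> set b \<subseteq> carrier R \<Longrightarrow> set (lsub R a b) \<subseteq> carrier R"
  by (auto simp: lsub_def nth0_def)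

lemma length_lsub: "length (lsub R a b) = max (length a) (length b)"
  by (simp add: lsub_def)

lemma nth0_lsub: "i < max (length a) (length b) \<Longrightarrow> nth0 R (lsub R a b) i = nth0 R a i \<ominus> nth0 R b i"
  by (simp add: lsub_def nth0_def)

lemma lin_eval_lsub:
  assumes a: "set a \<subseteq> carrier R" and b: "set b \<subseteq> carrier R" and x: "x \<in> carrier R"
  shows "lin_eval R q (lsub R a b) x = lin_eval R q a x \<ominus> lin_eval R q b x"
proof -
  define N where "N = max (length a) (length b)"
  have "lin_eval R q a x = (\<Oplus>i\<in>{..<N}. nth0 R a i \<otimes> x [^] (q ^ i))"
    using lin_eval_ext[OF a x] N_def by simp
  also have "\<dots> = (\<Oplus>i\<in>{..<N}. nth0 R (lsub R a b) i \<otimes> x [^] (q ^ i) \<oplus> nth0 R b i \<otimes> x [^] (q ^ i))"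
  proof (rule finsum_cong')
    fix i assume i: "i \<in> {..<N}"
    have "nth0 R a i = nth0 R (lsub R a b) i \<oplus> nth0 R b i"
      using i nth0_lsub[of i a b] N_def nth0_closed[OF a] nth0_closed[OF b]
      by (simp add: minus_add a_assoc a_minus_def l_neg)
    then show "nth0 R a i \<otimes> x [^] q ^ i = nth0 R (lsub R a b) i \<otimes> x [^] q ^ i \<oplus> nth0 R b i \<otimes> x [^] q ^ i"
      using nth0_closed[OF b] nth0_closed[OF lsub_closed[OF a b]] x by (simp add: l_distr)
  qed (use b x in \<open>auto simp: nth0_closed lsub_closed a b\<close>)
  also have "\<dots> = (\<Oplus>i\<in>{..<N}. nth0 R (lsub R a b) i \<otimes> x [^] (q ^ i)) \<oplus> (\<Oplus>i\<in>{..<N}. nth0 R b i \<otimes> x [^] (q ^ i))"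
    by (rule finsum_addf) (use b x in \<open>auto simp: nth0_closed lsub_closed a b\<close>)
  also have "\<dots> = lin_eval R q (lsub R a b) x \<oplus> lin_eval R q b x"
    using lin_eval_ext[OF lsub_closed[OF a b] x, of N] lin_eval_ext[OF b x, of N]
    by (simp add: N_def length_lsub)
  finally have "lin_eval R q a x = lin_eval R q (lsub R a b) x \<oplus> lin_eval R q b x" .
  then show ?thesis using lin_eval_closed[OF lsub_closed[OF a b] x] lin_eval_closed[OF b x]
    by (simp add: a_minus_def a_assoc r_neg)
qed

end

lemma (in UP_cring) evalRR_finsum:
  assumes x: "x \<in> carrier R"
  shows "finite A \<Longrightarrow> f \<in> A \<rightarrow> carrier P \<Longrightarrow>
    UnivPoly.eval R R id x (finsum P f A) = (\<Oplus>i\<in>A. UnivPoly.eval R R id x (f i))"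
proof (induction A rule: finite_induct)
  case empty
  have "UnivPoly.eval R R id x (UnivPoly.monom P \<zero> 0) = \<zero>" using evalRR_monom[of \<zero> x] x by simp
  then show ?case by (simp add: id_def)
next
  case (insert i A)
  then have fi: "f i \<in> carrier P" and fA: "f \<in> A \<rightarrow> carrier P" by auto
  have "UnivPoly.eval R R id x (finsum P f (insert i A)) = UnivPoly.eval R R id x (f i \<oplus>\<^bsub>P\<^esub> finsum P f A)"
    using insert fi fA by (simp add: P.finsum_insert)
  also have "\<dots> = UnivPoly.eval R R id x (f i) \<oplus> UnivPoly.eval R R id x (finsum P f A)"
    using fi fA x by (intro evalRR_add) auto
  also have "\<dots> = (\<Oplus>j\<in>insert i A. UnivPoly.eval R R id x (f j))"
    using insert fi fA x carrier_evalRR carrier_evalRR[unfolded id_def] by (subst R.finsum_insert) (auto simp: Pi_def id_def)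
  finally show ?case .
qed

context gctx begin

lemma qdeg_props:
  assumes nz: "\<not> lin_is_zero R a"
  shows "lin_qdeg R a < length a" "a ! lin_qdeg R a \<noteq> \<zero>"
    "\<And>i. i < length a \<Longrightarrow> lin_qdeg R a < i \<Longrightarrow> a ! i = \<zero>"
proof -
  let ?S = "{i. i < length a \<and> a ! i \<noteq> \<zero>}"
  have fin: "finite ?S" by simp
  have ne: "?S \<noteq> {}" using nz by (auto simp: lin_is_zero_def)
  have "lin_qdeg R a \<in> ?S" unfolding lin_qdeg_def using Max_in[OF fin ne] .
  then show "lin_qdeg R a < length a" "a ! lin_qdeg R a \<noteq> \<zero>" by auto
  fix i assume "i < length a" "lin_qdeg R a < i"
  show "a ! i = \<zero>"
  proof (rule ccontr)
    assume "a ! i \<noteq> \<zero>"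
    then have "i \<le> lin_qdeg R a" unfolding lin_qdeg_def using \<open>i < length a\<close> by (intro Max_ge) auto
    then show False using \<open>lin_qdeg R a < i\<close> by simp
  qed
qed

lemma qdeg_le:
  assumes "i < length a" "a ! i \<noteq> \<zero>" shows "i \<le> lin_qdeg R a"
  unfolding lin_qdeg_def using assms by (intro Max_ge) auto

lemma q_pow_inj: "q ^ i = q ^ j \<longleftrightarrow> i = j"
  using q_ge2 by (simp add: power_inject_exp)

lemma roots_bound_lin:
  assumes a: "set a \<subseteq> carrier R" and nz: "\<not> lin_is_zero R a"
  shows "card {x \<in> carrier R. lin_eval R q a x = \<zero>} \<le> q ^ lin_qdeg R a"
proof -
  interpret U: UP_domain R "UP R" by unfold_locales
  define d where "d = lin_qdeg R a"
  note dp = qdeg_props[OF nz, folded d_def]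
  define f where "f = (\<Oplus>\<^bsub>UP R\<^esub> i\<in>{..<length a}. UnivPoly.monom (UP R) (a ! i) (q ^ i))"
  have fc: "f \<in> carrier (UP R)" unfolding f_def by (rule U.P.finsum_closed) (use a in auto)
  have coeff_f: "UnivPoly.coeff (UP R) f n = (\<Oplus>i\<in>{..<length a}. (if q ^ i = n then a ! i else \<zero>))" for n
  proof -
    have "UnivPoly.coeff (UP R) f n = (\<Oplus>i\<in>{..<length a}. UnivPoly.coeff (UP R) (UnivPoly.monom (UP R) (a ! i) (q ^ i)) n)"
      unfolding f_def by (rule U.coeff_finsum) (use a in auto)
    also have "\<dots> = (\<Oplus>i\<in>{..<length a}. (if q ^ i = n then a ! i else \<zero>))"
      by (rule finsum_cong') (use a in auto)
    finally show ?thesis .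
  qed
  have f_nz: "f \<noteq> \<zero>\<^bsub>UP R\<^esub>"
  proof
    assume "f = \<zero>\<^bsub>UP R\<^esub>"
    then have "UnivPoly.coeff (UP R) f (q ^ d) = \<zero>" by simp
    moreover have "UnivPoly.coeff (UP R) f (q ^ d) = a ! d"
    proof -
      have "UnivPoly.coeff (UP R) f (q ^ d) = (\<Oplus>i\<in>{..<length a}. (if d = i then a ! i else \<zero>))"
        unfolding coeff_f by (rule finsum_cong') (use a in \<open>auto simp: q_pow_inj\<close>)
      also have "\<dots> = a ! d" by (rule finsum_singleton) (use a dp in auto)
      finally show ?thesis .
    qed
    ultimately show False using dp by simp
  qed
  have f_deg: "UnivPoly.deg R f \<le> q ^ d"
  proof (rule U.deg_aboveI)
    fix m assume m: "q ^ d < m"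
    have "UnivPoly.coeff (UP R) f m = (\<Oplus>i\<in>{..<length a}. \<zero>)"
      unfolding coeff_f
    proof (rule finsum_cong')
      fix i assume i: "i \<in> {..<length a}"
      show "(if q ^ i = m then a ! i else \<zero>) = \<zero>"
      proof (cases "q ^ i = m")
        case True
        then have "q ^ d < q ^ i" using m by simp
        then have "d < i" using q_ge2 by (simp add: power_strict_increasing_iff)
        then show ?thesis using dp(3) i True by auto
      qed simp
    qed auto
    then show "UnivPoly.coeff (UP R) f m = \<zero>" by simp
  qed (rule fc)
  have ev: "UnivPoly.eval R R id x f = lin_eval R q a x" if x: "x \<in> carrier R" for x
  proof -
    have "UnivPoly.eval R R id x f = (\<Oplus>i\<in>{..<length a}. UnivPoly.eval R R id x (UnivPoly.monom (UP R) (a ! i) (q ^ i)))"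
      unfolding f_def by (rule U.evalRR_finsum[OF x]) (use a in auto)
    also have "\<dots> = lin_eval R q a x"
      unfolding lin_eval_def by (rule finsum_cong') (use a x in \<open>auto simp: U.evalRR_monom\<close>)
    finally show ?thesis .
  qed
  have "card {x \<in> carrier R. UnivPoly.eval R R id x f = \<zero>} \<le> UnivPoly.deg R f"
    using U.roots_bound[OF fc f_nz finR] by blast
  moreover have "{x \<in> carrier R. UnivPoly.eval R R id x f = \<zero>} = {x \<in> carrier R. lin_eval R q a x = \<zero>}"
    using ev by auto
  ultimately show ?thesis using f_deg d_def by simp
qed

end

context gctx begin

lemma Span_as_image:
  assumes U: "set Us \<subseteq> carrier R"
  shows "Span K Us = (\<lambda>Ks. combine Ks Us) ` {Ks. set Ks \<subseteq> K \<and> length Ks = length Us}"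
  unfolding Span_eq_combine_set_length_version[OF K U] by auto

lemma finite_Span: "set Us \<subseteq> carrier R \<Longrightarrow> finite (Span K Us)"
  using finite_subset[OF Span_in_carrier[OF K_sub] finR] by blast

lemma card_Span_le:
  assumes U: "set Us \<subseteq> carrier R"
  shows "card (Span K Us) \<le> q ^ length Us"
proof -
  have "card (Span K Us) \<le> card {Ks. set Ks \<subseteq> K \<and> length Ks = length Us}"
    unfolding Span_as_image[OF U] by (rule card_image_le) (simp add: finite_lists_length_eq finK)
  also have "\<dots> = q ^ length Us" using card_lists_length_eq[OF finK] cardK by simp
  finally show ?thesis .
qed

lemma card_Span_indep:
  assumes I: "independent K Us"
  shows "card (Span K Us) = q ^ length Us"
proof -
  have U: "set Us \<subseteq> carrier R" using independent_in_carrier[OF I] .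
  have inj: "inj_on (\<lambda>Ks. combine Ks Us) {Ks. set Ks \<subseteq> K \<and> length Ks = length Us}"
  proof (rule inj_onI)
    fix Ks Ks' assume A: "Ks \<in> {Ks. set Ks \<subseteq> K \<and> length Ks = length Us}"
      "Ks' \<in> {Ks. set Ks \<subseteq> K \<and> length Ks = length Us}" and E: "combine Ks Us = combine Ks' Us"
    have "combine Ks Us \<in> Span K Us" using A unfolding Span_as_image[OF U] by auto
    from unique_decomposition[OF K I this] A E show "Ks = Ks'" by auto
  qed
  have "card (Span K Us) = card {Ks. set Ks \<subseteq> K \<and> length Ks = length Us}"
    unfolding Span_as_image[OF U] using card_image[OF inj] .
  also have "\<dots> = q ^ length Us" using card_lists_length_eq[OF finK] cardK by simp
  finally show ?thesis .
qed

lemma card_Span_rw: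
  assumes U: "set Us \<subseteq> carrier R"
  shows "card (Span K Us) = q ^ rank_weight R K Us"
proof -
  have "dimension ((dim over K) (Span K Us)) K (Span K Us)"
    using finite_dimensionE[OF K Span_finite_dimension[OF K U]] .
  then have D: "dimension (rank_weight R K Us) K (Span K Us)"
    by (simp add: rank_weight_def over_def)
  obtain Vs where V: "independent K Vs" "length Vs = rank_weight R K Us" "Span K Vs = Span K Us"
    using exists_base[OF K D] by blast
  then show ?thesis using card_Span_indep[OF V(1)] by simp
qed

lemma pow_le_cancel: "q ^ a \<le> q ^ b \<Longrightarrow> a \<le> b"
  using q_ge2 by (simp add: power_le_imp_le_exp)

lemma rw_le_length:
  assumes U: "set Us \<subseteq> carrier R" shows "rank_weight R K Us \<le> length Us"
  using card_Span_rw[OF U] card_Span_le[OF U] pow_le_cancel by simp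

lemma rw_mono_Span:
  assumes U: "set Us \<subseteq> carrier R" and V: "set Vs \<subseteq> carrier R" and S: "Span K Us \<subseteq> Span K Vs"
  shows "rank_weight R K Us \<le> rank_weight R K Vs"
proof -
  have "card (Span K Us) \<le> card (Span K Vs)" using S finite_Span[OF V] by (rule card_mono[rotated])
  then show ?thesis using card_Span_rw[OF U] card_Span_rw[OF V] pow_le_cancel by simp
qed

end

lemma card_fiber_bound:
  assumes V: "finite V" and B: "\<And>y. y \<in> \<phi> ` V \<Longrightarrow> card {x\<in>V. \<phi> x = y} \<le> B"
  shows "card V \<le> card (\<phi> ` V) * B"
proof -
  have E: "V = (\<Union>y\<in>\<phi> ` V. {x\<in>V. \<phi> x = y})" by auto
  have "card V = card (\<Union>y\<in>\<phi> ` V. {x\<in>V. \<phi> x = y})" using E by (rule arg_cong)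
  also have "\<dots> \<le> (\<Sum>y\<in>\<phi> ` V. card {x\<in>V. \<phi> x = y})"
    by (rule card_UN_le) (use V in simp)
  also have "\<dots> \<le> card (\<phi> ` V) * B" using sum_bounded_above[of "\<phi> ` V" _ B] B by simp
  finally show ?thesis .
qed

lemma map2_map_map: "map2 F (map f xs) (map g xs) = map (\<lambda>x. F (f x) (g x)) xs"
  by (induction xs) auto

context gctx begin

declare Span.simps[simp del]

lemma combine_zeros: "set Ks \<subseteq> carrier R \<Longrightarrow> combine Ks (map (\<lambda>_. \<zero>) Us) = \<zero>"
proof (induction Ks arbitrary: Us)
  case Nil then show ?case by simp
next
  case (Cons k Ks) then show ?case by (cases Us) auto
qed

lemma lin_eval_minus:
  assumes a: "set a \<subseteq> carrier R" and x: "x \<in> carrier R" and y: "y \<in> carrier R"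
  shows "lin_eval R q a (x \<ominus> y) = lin_eval R q a x \<ominus> lin_eval R q a y"
proof -
  have "lin_eval R q a (x \<ominus> y) \<oplus> lin_eval R q a y = lin_eval R q a ((x \<ominus> y) \<oplus> y)"
    using a x y by (simp add: lin_eval_add)
  also have "(x \<ominus> y) \<oplus> y = x" using x y by (simp add: a_minus_def a_assoc l_neg)
  finally have "lin_eval R q a (x \<ominus> y) \<oplus> lin_eval R q a y = lin_eval R q a x" .
  moreover have "lin_eval R q a (x \<ominus> y) \<in> carrier R" "lin_eval R q a y \<in> carrier R"
    using lin_eval_closed[OF a] x y by auto
  ultimately show ?thesis using lin_eval_closed[OF a x]
    by (simp add: a_minus_def a_assoc r_neg flip: \<open>lin_eval R q a (x \<ominus> y) \<oplus> lin_eval R q a y = lin_eval R q a x\<close>)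
qed

lemma vanish_bound:
  assumes h: "set h \<subseteq> carrier R" and I: "independent K Us"
    and van: "\<And>g. g \<in> set Us \<Longrightarrow> lin_eval R q h g = \<zero>" and nz: "\<not> lin_is_zero R h"
  shows "length Us \<le> lin_qdeg R h"
proof -
  have U: "set Us \<subseteq> carrier R" using independent_in_carrier[OF I] .
  have "Span K Us \<subseteq> {x \<in> carrier R. lin_eval R q h x = \<zero>}"
  proof
    fix y assume "y \<in> Span K Us"
    then obtain Ks where Ks: "set Ks \<subseteq> K" "length Ks = length Us" "y = combine Ks Us"
      using Span_mem_iff_length_version[OF K U] by blast
    have "lin_eval R q h y = combine Ks (map (lin_eval R q h) Us)"
      using lin_eval_combine[OF h Ks(1) U] Ks(3) by simp
    also have "map (lin_eval R q h) Us = map (\<lambda>_. \<zero>) Us" using van by auto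
    also have "combine Ks (map (\<lambda>_. \<zero>) Us) = \<zero>" using Ks(1) K_sub by (intro combine_zeros) auto
    finally show "y \<in> {x \<in> carrier R. lin_eval R q h x = \<zero>}"
      using \<open>y \<in> Span K Us\<close> Span_in_carrier[OF K_sub U] by auto
  qed
  then have "card (Span K Us) \<le> card {x \<in> carrier R. lin_eval R q h x = \<zero>}"
    by (rule card_mono[rotated]) (simp add: finR)
  then have "q ^ length Us \<le> q ^ lin_qdeg R h"
    using card_Span_indep[OF I] roots_bound_lin[OF h nz] by simp
  then show ?thesis by (rule pow_le_cancel)
qed

lemma image_bound:
  assumes h: "set h \<subseteq> carrier R" and nz: "\<not> lin_is_zero R h" and I: "independent K gs"
  shows "length gs \<le> rank_weight R K (map (lin_eval R q h) gs) + lin_qdeg R h"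
proof -
  have U: "set gs \<subseteq> carrier R" using independent_in_carrier[OF I] .
  let ?V = "Span K gs" and ?\<phi> = "lin_eval R q h"
  have VC: "?V \<subseteq> carrier R" using Span_in_carrier[OF K_sub U] .
  have "card ?V \<le> card (?\<phi> ` ?V) * q ^ lin_qdeg R h"
  proof (rule card_fiber_bound[OF finite_Span[OF U]])
    fix y assume "y \<in> ?\<phi> ` ?V"
    then obtain x0 where x0: "x0 \<in> ?V" "y = ?\<phi> x0" by blast
    have "card {x\<in>?V. ?\<phi> x = y} \<le> card {z \<in> carrier R. ?\<phi> z = \<zero>}"
    proof (rule card_inj_on_le)
      show "inj_on (\<lambda>x. x \<ominus> x0) {x\<in>?V. ?\<phi> x = y}"
      proof (rule inj_onI)
        fix x1 x2 assume "x1 \<in> {x\<in>?V. ?\<phi> x = y}" "x2 \<in> {x\<in>?V. ?\<phi> x = y}" "x1 \<ominus> x0 = x2 \<ominus> x0"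
        then show "x1 = x2" using VC x0 add.right_cancel[of "\<ominus> x0" x1 x2] unfolding a_minus_def by auto
      qed
      show "(\<lambda>x. x \<ominus> x0) ` {x\<in>?V. ?\<phi> x = y} \<subseteq> {z \<in> carrier R. ?\<phi> z = \<zero>}"
      proof
        fix z assume "z \<in> (\<lambda>x. x \<ominus> x0) ` {x\<in>?V. ?\<phi> x = y}"
        then obtain x where x: "x \<in> ?V" "?\<phi> x = y" "z = x \<ominus> x0" by blast
        have xc: "x \<in> carrier R" "x0 \<in> carrier R" using VC x x0 by auto
        have "?\<phi> z = ?\<phi> x \<ominus> ?\<phi> x0" using x(3) lin_eval_minus[OF h xc] by simp
        also have "\<dots> = \<zero>" using x(2) x0(2) lin_eval_closed[OF h xc(2)] by simp
        finally show "z \<in> {z \<in> carrier R. ?\<phi> z = \<zero>}" using xc x(3) by simp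
      qed
    qed (simp add: finR)
    also have "\<dots> \<le> q ^ lin_qdeg R h" using roots_bound_lin[OF h nz] .
    finally show "card {x\<in>?V. ?\<phi> x = y} \<le> q ^ lin_qdeg R h" .
  qed
  also have "?\<phi> ` ?V = Span K (map ?\<phi> gs)" using lin_eval_Span[OF h U] .
  also have "card (Span K (map ?\<phi> gs)) = q ^ rank_weight R K (map ?\<phi> gs)"
    by (rule card_Span_rw) (use U lin_eval_closed[OF h] in auto)
  finally have "q ^ length gs \<le> q ^ (rank_weight R K (map ?\<phi> gs) + lin_qdeg R h)"
    using card_Span_indep[OF I] by (simp add: power_add)
  then show ?thesis by (rule pow_le_cancel)
qed

end

context gctx begin

lemma lsub_props:
  assumes f: "set f \<subseteq> carrier R" and fnz: "\<not> lin_is_zero R f" and fk: "lin_qdeg R f = k"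
    and v: "set v \<subseteq> carrier R" and vk: "lin_is_zero R v \<or> lin_qdeg R v < k"
  shows "\<not> lin_is_zero R (lsub R f v)" "lin_qdeg R (lsub R f v) \<le> k"
proof -
  note fp = qdeg_props[OF fnz, unfolded fk]
  have f0: "nth0 R f i = \<zero>" if "k < i" for i
    using fp(3)[of i] that by (auto simp: nth0_def)
  have v0: "nth0 R v i = \<zero>" if "k \<le> i" for i
  proof (cases "lin_is_zero R v")
    case True then show ?thesis by (auto simp: nth0_def lin_is_zero_def)
  next
    case False
    then have "lin_qdeg R v < k" using vk by simp
    then show ?thesis using qdeg_props(3)[OF False, of i] that by (auto simp: nth0_def)
  qed
  let ?h = "lsub R f v"
  have hnth: "?h ! i = nth0 R f i \<ominus> nth0 R v i" if "i < length ?h" for i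
    using nth0_lsub[of i f v] that by (simp add: length_lsub nth0_def)
  have kh: "k < length ?h" using fp(1) by (simp add: length_lsub)
  have "?h ! k = f ! k"
    using hnth[OF kh] v0[of k] fp(1) f by (simp add: nth0_def a_minus_def)
  then have hk: "?h ! k \<noteq> \<zero>" using fp(2) by simp
  then show hnz: "\<not> lin_is_zero R ?h" using kh by (auto simp: lin_is_zero_def)
  show "lin_qdeg R ?h \<le> k"
  proof (rule ccontr)
    assume "\<not> lin_qdeg R ?h \<le> k"
    then have "k < lin_qdeg R ?h" by simp
    then have "?h ! lin_qdeg R ?h = \<zero>"
      using hnth[OF qdeg_props(1)[OF hnz]] f0 v0 by (simp add: a_minus_def)
    then show False using qdeg_props(2)[OF hnz] by simp
  qed
qed

lemma lower_bound:
  assumes f: "set f \<subseteq> carrier R" and fnz: "\<not> lin_is_zero R f" and fk: "lin_qdeg R f = k"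
    and v: "set v \<subseteq> carrier R" and vk: "lin_is_zero R v \<or> lin_qdeg R v < k"
    and I: "independent K gs"
  shows "length gs - k \<le> rank_dist R K (map (lin_eval R q f) gs) (map (lin_eval R q v) gs)"
proof -
  have U: "set gs \<subseteq> carrier R" using independent_in_carrier[OF I] .
  let ?h = "lsub R f v"
  have "map2 (\<lambda>x y. x \<ominus> y) (map (lin_eval R q f) gs) (map (lin_eval R q v) gs) = map (lin_eval R q ?h) gs"
    unfolding map2_map_map using U lin_eval_lsub[OF f v] by auto
  then have "rank_dist R K (map (lin_eval R q f) gs) (map (lin_eval R q v) gs) = rank_weight R K (map (lin_eval R q ?h) gs)"
    by (simp add: rank_dist_def)
  moreover have "length gs \<le> rank_weight R K (map (lin_eval R q ?h) gs) + lin_qdeg R ?h"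
    using image_bound[OF lsub_closed[OF f v] lsub_props(1)[OF f fnz fk v vk] I] .
  moreover have "lin_qdeg R ?h \<le> k" using lsub_props(2)[OF f fnz fk v vk] .
  ultimately show ?thesis by linarith
qed

lemma card_words: "card (words R n) = card (carrier R) ^ n"
proof -
  have "words R n = {xs. set xs \<subseteq> carrier R \<and> length xs = n}" by (auto simp: words_def)
  then show ?thesis using card_lists_length_eq[OF finR] by simp
qed

lemma finite_words: "finite (words R n)"
proof -
  have "words R n = {xs. set xs \<subseteq> carrier R \<and> length xs = n}" by (auto simp: words_def)
  then show ?thesis using finite_lists_length_eq[OF finR] by simp
qed

end

context gctx begin

lemma upper_bound:
  assumes I: "independent K gs" and n: "length gs = n" and kn: "k \<le> n" and u: "u \<in> words R n"
  shows "\<exists>c \<in> gabidulin R q k gs. rank_dist R K u c \<le> n - k"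
proof -
  have U: "set gs \<subseteq> carrier R" using independent_in_carrier[OF I] .
  have I': "independent K (take k gs)"
    using independent_split(2)[OF K, of "take k gs" "drop k gs"] I by simp
  define P where "P = {v. set v \<subseteq> carrier R \<and> length v = k}"
  define \<Phi> where "\<Phi> = (\<lambda>v. map (lin_eval R q v) (take k gs))"
  have inj: "inj_on \<Phi> P"
  proof (rule inj_onI)
    fix v w assume vP: "v \<in> P" and wP: "w \<in> P" and E: "\<Phi> v = \<Phi> w"
    have v: "set v \<subseteq> carrier R" and w: "set w \<subseteq> carrier R" using vP wP by (auto simp: P_def)
    let ?h = "lsub R v w"
    have lh: "length ?h = k" using vP wP by (simp add: length_lsub P_def)
    have van: "lin_eval R q ?h g = \<zero>" if "g \<in> set (take k gs)" for g
    proof -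
      have g: "g \<in> carrier R" using U in_set_takeD[OF that] by auto
      have "map (lin_eval R q v) (take k gs) = map (lin_eval R q w) (take k gs)"
        using E unfolding \<Phi>_def .
      then have eq: "lin_eval R q v g = lin_eval R q w g" using that map_eq_conv by fast
      have "lin_eval R q ?h g = lin_eval R q v g \<ominus> lin_eval R q w g" by (rule lin_eval_lsub[OF v w g])
      also have "\<dots> = \<zero>" unfolding eq using lin_eval_closed[OF w g] by simp
      finally show ?thesis .
    qed
    have hz: "lin_is_zero R ?h"
    proof (rule ccontr)
      assume nz: "\<not> lin_is_zero R ?h"
      have "length (take k gs) \<le> lin_qdeg R ?h"
        using vanish_bound[OF lsub_closed[OF v w] I' van nz] by simp
      moreover have "lin_qdeg R ?h < length ?h" using qdeg_props(1)[OF nz] .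
      ultimately show False using lh kn n by simp
    qed
    show "v = w"
    proof (rule nth_equalityI)
      show "length v = length w" using vP wP by (simp add: P_def)
      fix i assume i: "i < length v"
      then have ik: "i < k" using vP by (simp add: P_def)
      have "?h ! i = \<zero>" using hz ik lh by (simp add: lin_is_zero_def)
      moreover have "?h ! i = v ! i \<ominus> w ! i"
        using nth0_lsub[of i v w] ik lh vP wP by (simp add: nth0_def P_def length_lsub)
      ultimately show "v ! i = w ! i" using v w ik vP wP by (simp add: P_def)
    qed
  qed
  have sub: "\<Phi> ` P \<subseteq> words R k"
    using U kn n by (auto simp: \<Phi>_def P_def words_def dest!: in_set_takeD intro!: lin_eval_closed)
  have cardP: "card P = card (carrier R) ^ k"
    unfolding P_def using card_lists_length_eq[OF finR] by simp
  have PW: "\<Phi> ` P = words R k"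
    by (rule card_subset_eq[OF finite_words sub]) (simp add: card_image[OF inj] cardP card_words)
  have tkw: "take k u \<in> words R k" using u kn by (auto simp: words_def dest: in_set_takeD)
  have "take k u \<in> \<Phi> ` P" unfolding PW by (rule tkw)
  then obtain v where vP: "v \<in> P" and vu': "take k u = \<Phi> v" by (rule imageE)
  have vu: "\<Phi> v = take k u" using vu' by (rule sym)
  have v: "set v \<subseteq> carrier R" using vP by (simp add: P_def)
  define c where "c = map (lin_eval R q v) gs"
  have cG: "c \<in> gabidulin R q k gs"
  proof -
    have vz: "lin_is_zero R v \<or> lin_qdeg R v < k"
      using qdeg_props(1)[of v] vP by (auto simp: P_def)
    show ?thesis unfolding gabidulin_def c_def linpolys_def
      by (rule CollectI, rule exI[of _ v]) (use v vz in simp)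
  qed
  define d where "d = map2 (\<lambda>x y. x \<ominus> y) u c"
  have lu: "length u = n" and uc: "set u \<subseteq> carrier R" using u by (auto simp: words_def)
  have ld: "length d = n" using lu n by (simp add: d_def c_def)
  have dnth: "d ! i = u ! i \<ominus> lin_eval R q v (gs ! i)" if "i < n" for i
    using that lu n by (simp add: d_def c_def)
  have dc: "set d \<subseteq> carrier R"
  proof
    fix x assume "x \<in> set d"
    then obtain i where i: "i < n" "x = d ! i" using ld by (auto simp: in_set_conv_nth)
    show "x \<in> carrier R" using dnth[OF i(1)] i lu uc U n lin_eval_closed[OF v] by auto
  qed
  have dz: "d ! i = \<zero>" if "i < k" for i
  proof -
    have "lin_eval R q v (gs ! i) = \<Phi> v ! i" using that kn n by (simp add: \<Phi>_def)
    also have "\<dots> = u ! i" using vu that kn lu by simp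
    finally show ?thesis using dnth[of i] that kn uc lu by simp
  qed
  have dd: "set (drop k d) \<subseteq> carrier R" using dc by (meson in_set_dropD subset_iff)
  have "set d \<subseteq> Span K (drop k d)"
  proof
    fix x assume "x \<in> set d"
    then obtain i where i: "i < n" "x = d ! i" using ld by (auto simp: in_set_conv_nth)
    show "x \<in> Span K (drop k d)"
    proof (cases "i < k")
      case True then show ?thesis using dz i Span_subgroup_props(2)[OF K dd] by simp
    next
      case False
      then have "x \<in> set (drop k d)" using i ld by (auto simp: in_set_conv_nth intro!: exI[of _ "i - k"])
      then show ?thesis using Span_base_incl[OF K dd] by auto
    qed
  qed
  then have "Span K d \<subseteq> Span K (drop k d)" by (rule mono_Span_subset[OF K _ dd])
  then have "rank_weight R K d \<le> rank_weight R K (drop k d)" by (rule rw_mono_Span[OF dc dd])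
  also have "\<dots> \<le> length (drop k d)" by (rule rw_le_length[OF dd])
  finally have "rank_dist R K u c \<le> n - k" using ld by (simp add: rank_dist_def d_def)
  then show ?thesis using cG by blast
qed

end

context gctx begin

lemma lsub_zero_eq:
  assumes v: "set v \<subseteq> carrier R" and w: "set w \<subseteq> carrier R" and l: "length v = length w"
    and hz: "lin_is_zero R (lsub R v w)"
  shows "v = w"
proof (rule nth_equalityI)
  show "length v = length w" by (rule l)
  fix i assume i: "i < length v"
  have lh: "length (lsub R v w) = length v" using l by (simp add: length_lsub)
  have "lsub R v w ! i = \<zero>" using hz i lh by (simp add: lin_is_zero_def)
  moreover have "lsub R v w ! i = v ! i \<ominus> w ! i"
    using nth0_lsub[of i v w] i l lh by (simp add: nth0_def length_lsub)
  ultimately show "v ! i = w ! i" using v w i l by simp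
qed

lemma sigma_inj:
  assumes I: "independent K gs" and f: "set f \<subseteq> carrier R" and g: "set g \<subseteq> carrier R"
    and l: "length f = length g" and lg: "length f \<le> length gs"
    and E: "map (lin_eval R q f) gs = map (lin_eval R q g) gs"
  shows "f = g"
proof -
  have U: "set gs \<subseteq> carrier R" using independent_in_carrier[OF I] .
  let ?h = "lsub R f g"
  have van: "lin_eval R q ?h x = \<zero>" if x: "x \<in> set gs" for x
  proof -
    have xc: "x \<in> carrier R" using U x by auto
    have eq: "lin_eval R q f x = lin_eval R q g x" using E x map_eq_conv by fast
    have "lin_eval R q ?h x = lin_eval R q f x \<ominus> lin_eval R q g x" by (rule lin_eval_lsub[OF f g xc])
    also have "\<dots> = \<zero>" unfolding eq using lin_eval_closed[OF g xc] by simp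
    finally show ?thesis .
  qed
  have "lin_is_zero R ?h"
  proof (rule ccontr)
    assume nz: "\<not> lin_is_zero R ?h"
    have "length gs \<le> lin_qdeg R ?h" by (rule vanish_bound[OF lsub_closed[OF f g] I van nz])
    moreover have "lin_qdeg R ?h < length ?h" using qdeg_props(1)[OF nz] .
    ultimately show False using l lg by (simp add: length_lsub)
  qed
  then show ?thesis by (rule lsub_zero_eq[OF f g l])
qed

lemma top_coeff_props:
  assumes f: "set f \<subseteq> carrier R" and l: "length f = Suc k" and fk: "f ! k \<noteq> \<zero>"
  shows "\<not> lin_is_zero R f" "lin_qdeg R f = k"
proof -
  show nz: "\<not> lin_is_zero R f" using l fk by (auto simp: lin_is_zero_def)
  have "k \<le> lin_qdeg R f" using qdeg_le[of k f] l fk by simp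
  moreover have "lin_qdeg R f < Suc k" using qdeg_props(1)[OF nz] l by simp
  ultimately show "lin_qdeg R f = k" by simp
qed

end

theorem corollary1:
  fixes R :: "('a, 'b) ring_scheme" and K :: "'a set"
    and q m n k :: nat and gs :: "'a list"
  assumes "field R" and "subfield K R"
    and "\<exists>(p::nat) e. Factorial_Ring.prime p \<and> 0 < e \<and> q = p ^ e"
    and "card K = q" and "finite (carrier R)" and "card (carrier R) = q ^ m"
    and "1 \<le> k" and "k < n" and "n \<le> m"
    and "length gs = n" and "set gs \<subseteq> carrier R" and "ring.independent R K gs"
  shows "(\<forall>f \<in> linpolys R. \<not> lin_is_zero R f \<and> lin_qdeg R f = k \<longrightarrow>
            deep_hole R K n (gabidulin R q k gs) (map (lin_eval R q f) gs)
          \<and> dist_to_code R K (map (lin_eval R q f) gs) (gabidulin R q k gs) = n - k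
          \<and> covering_radius R K n (gabidulin R q k gs) = n - k)
       \<and> (q ^ m - 1) * q ^ (m * k)
           \<le> card {u. deep_hole R K n (gabidulin R q k gs) u}"
proof -
  have ctx: "gctx R K q" using assms unfolding gctx_def gctx_axioms_def by auto
  interpret G: gctx R K q by (rule ctx)
  have I: "G.independent K gs" using assms(12) .
  have n: "length gs = n" using assms(10) .
  have kn: "k \<le> n" using assms(8) by simp
  have U: "set gs \<subseteq> carrier R" using assms(11) .
  define C where "C = gabidulin R q k gs"
  have sw: "map (lin_eval R q f) gs \<in> words R n" if "set f \<subseteq> carrier R" for f
    using that U n G.lin_eval_closed by (auto simp: words_def)
  have Cw: "C \<subseteq> words R n"
    unfolding C_def gabidulin_def linpolys_def using sw by auto
  have finC: "finite C" using finite_subset[OF Cw G.finite_words] .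
  have c0: "map (lin_eval R q []) gs \<in> C"
    unfolding C_def gabidulin_def linpolys_def by (rule CollectI, rule exI[of _ "[]"]) (simp add: lin_is_zero_def)
  have ub: "dist_to_code R K u C \<le> n - k" if u: "u \<in> words R n" for u
  proof -
    obtain c where c: "c \<in> C" "rank_dist R K u c \<le> n - k"
      using G.upper_bound[OF I n kn u] unfolding C_def by blast
    have "dist_to_code R K u C \<le> rank_dist R K u c"
      unfolding dist_to_code_def using finC c(1) by (intro Min_le) auto
    then show ?thesis using c(2) by simp
  qed
  have lb: "n - k \<le> dist_to_code R K (map (lin_eval R q f) gs) C"
    if f: "set f \<subseteq> carrier R" and fnz: "\<not> lin_is_zero R f" and fk: "lin_qdeg R f = k" for f
  proof -
    have "dist_to_code R K (map (lin_eval R q f) gs) C \<in> rank_dist R K (map (lin_eval R q f) gs) ` C"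
      unfolding dist_to_code_def using finC c0 by (intro Min_in) auto
    then obtain c where cC: "c \<in> C" and dc: "dist_to_code R K (map (lin_eval R q f) gs) C = rank_dist R K (map (lin_eval R q f) gs) c"
      by blast
    from cC obtain v where cv: "c = map (lin_eval R q v) gs" and v: "set v \<subseteq> carrier R"
      and vk: "lin_is_zero R v \<or> lin_qdeg R v < k"
      unfolding C_def gabidulin_def linpolys_def by blast
    show ?thesis using G.lower_bound[OF f fnz fk v vk I] n dc cv by simp
  qed
  have deq: "dist_to_code R K (map (lin_eval R q f) gs) C = n - k"
    if f: "set f \<subseteq> carrier R" and fnz: "\<not> lin_is_zero R f" and fk: "lin_qdeg R f = k" for f
    using lb[OF f fnz fk] ub[OF sw[OF f]] by simp
  define f0 where "f0 = replicate k \<zero>\<^bsub>R\<^esub> @ [\<one>\<^bsub>R\<^esub>]"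
  have f0c: "set f0 \<subseteq> carrier R" by (auto simp: f0_def)
  have f0l: "length f0 = Suc k" by (simp add: f0_def)
  have f0k: "f0 ! k \<noteq> \<zero>\<^bsub>R\<^esub>" by (simp add: f0_def nth_append)
  note f0p = G.top_coeff_props[OF f0c f0l f0k]
  have cov: "covering_radius R K n C = n - k"
    unfolding covering_radius_def
  proof (rule Max_eqI)
    show "finite ((\<lambda>u. dist_to_code R K u C) ` words R n)" using G.finite_words by simp
    show "y \<le> n - k" if "y \<in> (\<lambda>u. dist_to_code R K u C) ` words R n" for y
      using that ub by auto
    show "n - k \<in> (\<lambda>u. dist_to_code R K u C) ` words R n"
      using deq[OF f0c f0p] sw[OF f0c] by (intro image_eqI[of _ _ "map (lin_eval R q f0) gs"]) auto
  qed
  have part1: "\<forall>f \<in> linpolys R. \<not> lin_is_zero R f \<and> lin_qdeg R f = k \<longrightarrow>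
            deep_hole R K n C (map (lin_eval R q f) gs)
          \<and> dist_to_code R K (map (lin_eval R q f) gs) C = n - k
          \<and> covering_radius R K n C = n - k"
  proof (intro ballI impI)
    fix f assume fl: "f \<in> linpolys R" and fp: "\<not> lin_is_zero R f \<and> lin_qdeg R f = k"
    have f: "set f \<subseteq> carrier R" using fl by (simp add: linpolys_def)
    show "deep_hole R K n C (map (lin_eval R q f) gs)
          \<and> dist_to_code R K (map (lin_eval R q f) gs) C = n - k
          \<and> covering_radius R K n C = n - k"
      using deq[OF f] fp sw[OF f] cov by (simp add: deep_hole_def)
  qed
  define L where "L = {xs. set xs \<subseteq> carrier R \<and> length xs = k}"
  define S where "S = {f. set f \<subseteq> carrier R \<and> length f = Suc k \<and> f ! k \<noteq> \<zero>\<^bsub>R\<^esub>}"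
  have SL: "S = (\<lambda>(xs, y). xs @ [y]) ` (L \<times> (carrier R - {\<zero>\<^bsub>R\<^esub>}))"
  proof (intro equalityI subsetI)
    fix f assume "f \<in> S"
    then have f: "set f \<subseteq> carrier R" "length f = Suc k" "f ! k \<noteq> \<zero>\<^bsub>R\<^esub>" by (auto simp: S_def)
    have fne: "f \<noteq> []" using f(2) by auto
    have "f = butlast f @ [last f]" using fne by simp
    moreover have "last f = f ! k" using f(2) fne by (simp add: last_conv_nth)
    moreover have "butlast f \<in> L" using f(1,2) by (auto simp: L_def dest: in_set_butlastD)
    moreover have "last f \<in> carrier R" using f(1) fne by auto
    ultimately show "f \<in> (\<lambda>(xs, y). xs @ [y]) ` (L \<times> (carrier R - {\<zero>\<^bsub>R\<^esub>}))"
      using f(3) by (intro image_eqI[of _ _ "(butlast f, last f)"]) auto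
  next
    fix f assume "f \<in> (\<lambda>(xs, y). xs @ [y]) ` (L \<times> (carrier R - {\<zero>\<^bsub>R\<^esub>}))"
    then obtain xs y where "f = xs @ [y]" "xs \<in> L" "y \<in> carrier R" "y \<noteq> \<zero>\<^bsub>R\<^esub>" by auto
    then show "f \<in> S" by (auto simp: S_def L_def nth_append)
  qed
  have injS: "inj_on (\<lambda>(xs, y). xs @ [y]) (L \<times> (carrier R - {\<zero>\<^bsub>R\<^esub>}))"
    by (rule inj_onI) auto
  have cardL: "card L = card (carrier R) ^ k"
    unfolding L_def using card_lists_length_eq[OF assms(5)] by simp
  have cardS: "card S = (q ^ m - 1) * q ^ (m * k)"
  proof -
    have "card S = card L * card (carrier R - {\<zero>\<^bsub>R\<^esub>})"
      unfolding SL card_image[OF injS] by (simp add: card_cartesian_product)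
    also have "card (carrier R - {\<zero>\<^bsub>R\<^esub>}) = q ^ m - 1"
      using assms(6) by (simp add: card_Diff_singleton)
    moreover have "card L = q ^ (m * k)" using cardL assms(6) by (simp add: power_mult)
    ultimately show ?thesis by simp
  qed
  have injsig: "inj_on (\<lambda>f. map (lin_eval R q f) gs) S"
  proof (rule inj_onI)
    fix f g assume "f \<in> S" "g \<in> S" "map (lin_eval R q f) gs = map (lin_eval R q g) gs"
    then show "f = g" using G.sigma_inj[OF I] n assms(8) by (auto simp: S_def)
  qed
  have DHsub: "(\<lambda>f. map (lin_eval R q f) gs) ` S \<subseteq> {u. deep_hole R K n C u}"
  proof
    fix u assume "u \<in> (\<lambda>f. map (lin_eval R q f) gs) ` S"
    then obtain f where fS: "f \<in> S" and u: "u = map (lin_eval R q f) gs" by blast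
    have f: "set f \<subseteq> carrier R" "length f = Suc k" "f ! k \<noteq> \<zero>\<^bsub>R\<^esub>" using fS by (auto simp: S_def)
    have "f \<in> linpolys R" using f by (simp add: linpolys_def)
    then show "u \<in> {u. deep_hole R K n C u}"
      using part1 G.top_coeff_props[OF f] u by auto
  qed
  have finDH: "finite {u. deep_hole R K n C u}"
    by (rule finite_subset[OF _ G.finite_words[of n]]) (auto simp: deep_hole_def)
  have "card S \<le> card {u. deep_hole R K n C u}"
    using card_mono[OF finDH DHsub] card_image[OF injsig] by simp
  then show ?thesis using part1 cardS unfolding C_def by simp
qed


end
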